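(* Let $X_1,X_2$ be diffeological spaces, let $Y\subseteq X_1$ and let $f:Y\to X_2$ be a diffeomorphism onto $f(Y)$ such that $i^*(\Omega^1(X_1))=(f^*j^* )(\Omega^1(X_2))$, where $i:Y\hookrightarrow X_1$ and $j:f(Y)\hookrightarrow X_2$ are the inclusions. Let $y\in Y$, and suppose that $\Lambda^1_y(X_1)$ and $\Lambda^1_{f(y)}(X_2)$ are finite-dimensional and carry compatible pseudo-metrics (scalar products) $g_1^\Lambda(y)$ and $g_2^\Lambda(f(y))$. Then for any $\alpha_1\in\Lambda^1_y(X_1)$ and $\alpha_2\in\Lambda^1_{f(y)}(X_2)$, the functionals $\alpha_1^*:=g_1^\Lambda(y)(\alpha_1,\cdot)\in(\Lambda^1_y(X_1))^*$ and $\alpha_2^*:=g_2^\Lambda(f(y))(\alpha_2,\cdot)\in(\Lambda^1_{f(y)}(X_2))^*$ are compatible if and only if $\alpha_1$ and $\alpha_2$ are compatible.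
   Context: A differential 1-form $\omega$ on a diffeological space $X$ assigns to each plot $p:U\to X$ a smooth 1-form $\omega(p)$ on $U$ with $\omega(p\circ h)=h^*\omega(p)$ for smooth $h$; $\Omega^1(X)$ is the space of these, and smooth maps induce pullbacks. $\Omega^1_x(X)$ is the subspace of forms with $\omega(p)(0)=0$ for every plot $p$ with $p(0)=x$; $\Lambda^1_x(X)=\Omega^1(X)/\Omega^1_x(X)$ (when finite-dimensional, it carries the standard diffeology). The pullbacks induce linear maps $i^*_\Lambda:\Lambda^1_y(X_1)\to\Lambda^1_y(Y)$, $j^*_\Lambda:\Lambda^1_{f(y)}(X_2)\to\Lambda^1_{f(y)}(f(Y))$, $f^*_\Lambda:\Lambda^1_{f(y)}(f(Y))\to\Lambda^1_y(Y)$. Elements $\beta_1\in\Lambda^1_y(X_1)$, $\beta_2\in\Lambda^1_{f(y)}(X_2)$ are compatible if $i^*_\Lambda\beta_1=f^*_\Lambda j^*_\Lambda\beta_2$. Scalar products $g_1^\Lambda(y)$, $g_2^\Lambda(f(y))$ are compatible if $g_1^\Lambda(y)(\omega',\mu')=g_2^\Lambda(f(y))(\omega'',\mu'')$ for all compatible pairs $(\omega',\omega''),(\mu',\mu'')$. Let $\pi_{1}^{ort}$ be the $g_1^\Lambda(y)$-orthogonal projection of $\Lambda^1_y(X_1)$ onto the orthogonal complement of $\ker i^*_\Lambda$, and $\pi_2^{ort}$ the $g_2^\Lambda(f(y))$-orthogonal projection of $\Lambda^1_{f(y)}(X_2)$ onto the orthogonal complement of $\ker j^*_\Lambda$. Functionals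 $\alpha_1^*\in(\Lambda^1_y(X_1))^*$, $\alpha_2^*\in(\Lambda^1_{f(y)}(X_2))^*$ are compatible if $\alpha_1^*(\pi_1^{ort}(\beta_1))=\alpha_2^*(\pi_2^{ort}(\beta_2))$ for every compatible pair $\beta_1\in\Lambda^1_y(X_1)$, $\beta_2\in\Lambda^1_{f(y)}(X_2)$. *)

theory Defs
  imports "HOL-Analysis.Analysis"
begin

type_synonym rn = "nat \<Rightarrow> real"

text \<open>R^n = points supported on the first n coordinates; its topology is the subspace
  topology of the product topology on nat => real (= the Euclidean topology).\<close>
definition euc :: "nat \<Rightarrow> rn set" where
  "euc n = {x. \<forall>i. n \<le> i \<longrightarrow> x i = 0}"

definition open_dom :: "nat \<Rightarrow> rn set \<Rightarrow> bool" where
  "open_dom n U \<longleftrightarrow> openin (top_of_set (euc n)) U"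

definition pd :: "nat \<Rightarrow> (rn \<Rightarrow> real) \<Rightarrow> rn \<Rightarrow> real" where
  "pd i g x = deriv (\<lambda>t. g (x(i := x i + t))) 0"

fun iter_pd :: "nat list \<Rightarrow> (rn \<Rightarrow> real) \<Rightarrow> rn \<Rightarrow> real" where
  "iter_pd [] g = g"
| "iter_pd (i # is) g = pd i (iter_pd is g)"

definition smooth_fun :: "nat \<Rightarrow> rn set \<Rightarrow> (rn \<Rightarrow> real) \<Rightarrow> bool" where
  "smooth_fun n U g \<longleftrightarrow>
     (\<forall>is. set is \<subseteq> {..<n} \<longrightarrow>
        continuous_on U (iter_pd is g) \<and>
        (\<forall>i<n. \<forall>x\<in>U. (\<lambda>t. iter_pd is g (x(i := x i + t))) differentiable (at 0)))"

definition smooth_dom_map :: "nat \<Rightarrow> rn set \<Rightarrow> nat \<Rightarrow> rn set \<Rightarrow> (rn \<Rightarrow> rn) \<Rightarrow> bool" where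
  "smooth_dom_map k V n U h \<longleftrightarrow> open_dom k V \<and> open_dom n U \<and> h ` V \<subseteq> U \<and>
     (\<forall>i<n. smooth_fun k V (\<lambda>v. h v i))"

text \<open>A parametrization (n, U, p): U open in R^n, p : U -> X (extensional on U).\<close>
type_synonym 'a plot = "nat \<times> rn set \<times> (rn \<Rightarrow> 'a)"

definition wf_param :: "'a set \<Rightarrow> 'a plot \<Rightarrow> bool" where
  "wf_param X q = (case q of (n, U, p) \<Rightarrow> open_dom n U \<and> p \<in> U \<rightarrow> X \<and> p \<in> extensional U)"

definition diffeology :: "'a set \<Rightarrow> 'a plot set \<Rightarrow> bool" where
  "diffeology X D \<longleftrightarrow>
     (\<forall>q\<in>D. wf_param X q) \<and>
     (\<forall>n U x. open_dom n U \<and> x \<in> X \<longrightarrow> (n, U, restrict (\<lambda>_. x) U) \<in> D) \<and>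
     (\<forall>n U p. wf_param X (n, U, p) \<and>
        (\<forall>u\<in>U. \<exists>V. open_dom n V \<and> u \<in> V \<and> V \<subseteq> U \<and> (n, V, restrict p V) \<in> D)
        \<longrightarrow> (n, U, p) \<in> D) \<and>
     (\<forall>n U p k V h. (n, U, p) \<in> D \<and> smooth_dom_map k V n U h
        \<longrightarrow> (k, V, restrict (p \<circ> h) V) \<in> D)"

definition sub_diff :: "'a plot set \<Rightarrow> 'a set \<Rightarrow> 'a plot set" where
  "sub_diff D Y = {q \<in> D. case q of (n, U, p) \<Rightarrow> p ` U \<subseteq> Y}"

definition smooth_map :: "'a set \<Rightarrow> 'a plot set \<Rightarrow> 'b set \<Rightarrow> 'b plot set \<Rightarrow> ('a \<Rightarrow> 'b) \<Rightarrow> bool" where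
  "smooth_map X D X' D' f \<longleftrightarrow> f \<in> X \<rightarrow> X' \<and>
     (\<forall>n U p. (n, U, p) \<in> D \<longrightarrow> (n, U, restrict (f \<circ> p) U) \<in> D')"

definition diffeomorphism :: "'a set \<Rightarrow> 'a plot set \<Rightarrow> 'b set \<Rightarrow> 'b plot set \<Rightarrow> ('a \<Rightarrow> 'b) \<Rightarrow> bool" where
  "diffeomorphism X D X' D' f \<longleftrightarrow> bij_betw f X X' \<and> smooth_map X D X' D' f \<and>
     smooth_map X' D' X D (inv_into X f)"

text \<open>A 1-form assigns to each plot (n,U,p) the coefficient functions x |-> (omega_1(x),...,omega_n(x))
  of a smooth 1-form on U (zero outside U, outside D, and beyond index n).\<close>
type_synonym 'a form = "'a plot \<Rightarrow> rn \<Rightarrow> rn"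

definition zero_form :: "'a form" where
  "zero_form = (\<lambda>_ _ _. 0)"

definition form_pullback :: "nat \<Rightarrow> rn set \<Rightarrow> nat \<Rightarrow> (rn \<Rightarrow> rn) \<Rightarrow> (rn \<Rightarrow> rn) \<Rightarrow> rn \<Rightarrow> rn" where
  "form_pullback k V n h c = (\<lambda>v. if v \<in> V then
      (\<lambda>j. if j < k then (\<Sum>i<n. c (h v) i * pd j (\<lambda>w. h w i) v) else 0) else (\<lambda>_. 0))"

definition is_form :: "'a plot set \<Rightarrow> 'a form \<Rightarrow> bool" where
  "is_form D \<omega> \<longleftrightarrow>
     (\<forall>q. q \<notin> D \<longrightarrow> \<omega> q = (\<lambda>_ _. 0)) \<and>
     (\<forall>n U p. (n, U, p) \<in> D \<longrightarrow>
        (\<forall>x. x \<notin> U \<longrightarrow> \<omega> (n, U, p) x = (\<lambda>_. 0)) \<and>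
        (\<forall>x i. n \<le> i \<longrightarrow> \<omega> (n, U, p) x i = 0) \<and>
        (\<forall>i<n. smooth_fun n U (\<lambda>x. \<omega> (n, U, p) x i))) \<and>
     (\<forall>n U p k V h. (n, U, p) \<in> D \<and> smooth_dom_map k V n U h
        \<longrightarrow> \<omega> (k, V, restrict (p \<circ> h) V) = form_pullback k V n h (\<omega> (n, U, p)))"

definition Omega :: "'a plot set \<Rightarrow> 'a form set" where
  "Omega D = {\<omega>. is_form D \<omega>}"

definition origin :: rn where "origin = (\<lambda>_. 0)"

definition Omega_at :: "'a plot set \<Rightarrow> 'a \<Rightarrow> 'a form set" where
  "Omega_at D x = {\<omega> \<in> Omega D. \<forall>n U p. (n, U, p) \<in> D \<and> origin \<in> U \<and> p origin = x
       \<longrightarrow> \<omega> (n, U, p) origin = (\<lambda>_. 0)}"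

definition fadd :: "'a form \<Rightarrow> 'a form \<Rightarrow> 'a form" where
  "fadd a b = (\<lambda>q z i. a q z i + b q z i)"
definition fdiff :: "'a form \<Rightarrow> 'a form \<Rightarrow> 'a form" where
  "fdiff a b = (\<lambda>q z i. a q z i - b q z i)"
definition fscale :: "real \<Rightarrow> 'a form \<Rightarrow> 'a form" where
  "fscale r a = (\<lambda>q z i. r * a q z i)"
definition flin :: "'a form set \<Rightarrow> ('a form \<Rightarrow> real) \<Rightarrow> 'a form" where
  "flin B c = (\<lambda>q z i. \<Sum>b\<in>B. c b * b q z i)"

definition pb :: "('a \<Rightarrow> 'b) \<Rightarrow> 'a plot set \<Rightarrow> 'b form \<Rightarrow> 'a form" where
  "pb \<phi> D \<omega> = (\<lambda>q. if q \<in> D then (case q of (n, U, p) \<Rightarrow> \<omega> (n, U, restrict (\<phi> \<circ> p) U))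
                    else (\<lambda>_ _. 0))"

section \<open>Lambda^1_x(X) = Omega^1(X) / Omega^1_x(X), via representatives\<close>

text \<open>equality of classes in Lambda^1_x(X) of two representatives\<close>
definition mod_eq :: "'a plot set \<Rightarrow> 'a \<Rightarrow> 'a form \<Rightarrow> 'a form \<Rightarrow> bool" where
  "mod_eq D x a b \<longleftrightarrow> a \<in> Omega D \<and> b \<in> Omega D \<and> fdiff a b \<in> Omega_at D x"

definition fin_dim_Lambda :: "'a plot set \<Rightarrow> 'a \<Rightarrow> bool" where
  "fin_dim_Lambda D x \<longleftrightarrow> (\<exists>B. finite B \<and> B \<subseteq> Omega D \<and>
      (\<forall>\<omega>\<in>Omega D. \<exists>c. mod_eq D x \<omega> (flin B c)))"

text \<open>A scalar product on Lambda^1_x(X), given on representatives: symmetric bilinear form on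
  Omega^1(X) descending to the quotient and positive definite there.\<close>
definition scalar_prod_Lambda :: "'a plot set \<Rightarrow> 'a \<Rightarrow> ('a form \<Rightarrow> 'a form \<Rightarrow> real) \<Rightarrow> bool" where
  "scalar_prod_Lambda D x g \<longleftrightarrow>
     (\<forall>a\<in>Omega D. \<forall>b\<in>Omega D. g a b = g b a) \<and>
     (\<forall>a\<in>Omega D. \<forall>b\<in>Omega D. \<forall>c\<in>Omega D. g (fadd a b) c = g a c + g b c) \<and>
     (\<forall>r. \<forall>a\<in>Omega D. \<forall>c\<in>Omega D. g (fscale r a) c = r * g a c) \<and>
     (\<forall>a\<in>Omega_at D x. \<forall>b\<in>Omega D. g a b = 0) \<and>
     (\<forall>a\<in>Omega D. 0 \<le> g a a \<and> (g a a = 0 \<longrightarrow> a \<in> Omega_at D x))"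

text \<open>beta1 in Lambda^1_y(X1), beta2 in Lambda^1_{f y}(X2) compatible:
  i^*_Lambda beta1 = f^*_Lambda j^*_Lambda beta2 in Lambda^1_y(Y)\<close>
definition compatible_forms ::
  "'a plot set \<Rightarrow> 'b plot set \<Rightarrow> 'a set \<Rightarrow> ('a \<Rightarrow> 'b) \<Rightarrow> 'a \<Rightarrow> 'a form \<Rightarrow> 'b form \<Rightarrow> bool" where
  "compatible_forms D1 D2 Y f y \<beta>1 \<beta>2 \<longleftrightarrow> \<beta>1 \<in> Omega D1 \<and> \<beta>2 \<in> Omega D2 \<and>
     mod_eq (sub_diff D1 Y) y (pb id (sub_diff D1 Y) \<beta>1)
        (pb f (sub_diff D1 Y) (pb id (sub_diff D2 (f ` Y)) \<beta>2))"

definition compatible_sp ::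
  "'a plot set \<Rightarrow> 'b plot set \<Rightarrow> 'a set \<Rightarrow> ('a \<Rightarrow> 'b) \<Rightarrow> 'a \<Rightarrow>
   ('a form \<Rightarrow> 'a form \<Rightarrow> real) \<Rightarrow> ('b form \<Rightarrow> 'b form \<Rightarrow> real) \<Rightarrow> bool" where
  "compatible_sp D1 D2 Y f y g1 g2 \<longleftrightarrow>
     (\<forall>\<omega>1 \<omega>2 \<mu>1 \<mu>2. compatible_forms D1 D2 Y f y \<omega>1 \<omega>2 \<and> compatible_forms D1 D2 Y f y \<mu>1 \<mu>2
        \<longrightarrow> g1 \<omega>1 \<mu>1 = g2 \<omega>2 \<mu>2)"

text \<open>kernel of i^*_Lambda (resp. j^*_Lambda), as a set of representatives\<close>
definition ker_i :: "'a plot set \<Rightarrow> 'a set \<Rightarrow> 'a \<Rightarrow> 'a form set" where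
  "ker_i D1 Y y = {\<omega> \<in> Omega D1. pb id (sub_diff D1 Y) \<omega> \<in> Omega_at (sub_diff D1 Y) y}"

text \<open>w' represents the g-orthogonal projection of (the class of) w onto the g-orthogonal
  complement of K (K contains Omega_x, g descends to the quotient)\<close>
definition is_orth_proj :: "'a plot set \<Rightarrow> ('a form \<Rightarrow> 'a form \<Rightarrow> real) \<Rightarrow> 'a form set \<Rightarrow>
    'a form \<Rightarrow> 'a form \<Rightarrow> bool" where
  "is_orth_proj D g K w w' \<longleftrightarrow> w' \<in> Omega D \<and> fdiff w w' \<in> K \<and> (\<forall>k\<in>K. g w' k = 0)"

text \<open>Compatibility of functionals phi1 on Lambda^1_y(X1), phi2 on Lambda^1_{f y}(X2)
  (given on representatives): phi1(pi1 beta1) = phi2(pi2 beta2) for all compatible beta1, beta2.\<close>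
definition compatible_functionals ::
  "'a plot set \<Rightarrow> 'b plot set \<Rightarrow> 'a set \<Rightarrow> ('a \<Rightarrow> 'b) \<Rightarrow> 'a \<Rightarrow>
   ('a form \<Rightarrow> 'a form \<Rightarrow> real) \<Rightarrow> ('b form \<Rightarrow> 'b form \<Rightarrow> real) \<Rightarrow>
   ('a form \<Rightarrow> real) \<Rightarrow> ('b form \<Rightarrow> real) \<Rightarrow> bool" where
  "compatible_functionals D1 D2 Y f y g1 g2 \<phi>1 \<phi>2 \<longleftrightarrow>
     (\<forall>\<beta>1 \<beta>2 \<beta>1' \<beta>2'. compatible_forms D1 D2 Y f y \<beta>1 \<beta>2 \<and>
        is_orth_proj D1 g1 (ker_i D1 Y y) \<beta>1 \<beta>1' \<and>
        is_orth_proj D2 g2 (ker_i D2 (f ` Y) (f y)) \<beta>2 \<beta>2'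
        \<longrightarrow> \<phi>1 \<beta>1' = \<phi>2 \<beta>2')"

end

theory Submission
  imports Defs
begin

lemma near_in_U:
  assumes "open_dom n U" "x \<in> U" "i < n"
  shows "eventually (\<lambda>t. x(i := x i + t) \<in> U) (nhds (0::real))"
proof -
  obtain T where T: "open T" "U = T \<inter> euc n"
    using assms(1) unfolding open_dom_def openin_open by auto
  have c: "continuous_on UNIV (\<lambda>t::real. x(i := x i + t))"
  proof (intro continuous_on_coordinatewise_then_product)
    fix j show "continuous_on UNIV (\<lambda>t::real. (x(i := x i + t)) j)"
      by (cases "j = i") (simp_all add: continuous_intros)
  qed
  have o: "open ((\<lambda>t::real. x(i := x i + t)) -` T)"
    using open_vimage[OF T(1) c] .
  have "0 \<in> (\<lambda>t::real. x(i := x i + t)) -` T" using assms(2) T by auto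
  hence ev: "eventually (\<lambda>t. t \<in> (\<lambda>t::real. x(i := x i + t)) -` T) (nhds 0)"
    using o eventually_nhds by blast
  have "x \<in> euc n" using assms(2) T by auto
  hence "\<And>t. x(i := x i + t) \<in> euc n" using assms(3) by (auto simp: euc_def)
  thus ?thesis using T(2) by (auto intro: eventually_mono[OF ev])
qed

lemma deriv_step:
  fixes P G H :: "real \<Rightarrow> real"
  assumes "eventually (\<lambda>t. P t = a * G t + b * H t) (nhds 0)"
    "G differentiable (at 0)" "H differentiable (at 0)"
  shows "DERIV P 0 :> a * deriv G 0 + b * deriv H 0"
proof -
  have g: "DERIV G 0 :> deriv G 0" and h: "DERIV H 0 :> deriv H 0"
    using assms(2,3) by (simp_all add: DERIV_deriv_iff_real_differentiable)
  have "DERIV (\<lambda>t. a * G t + b * H t) 0 :> a * deriv G 0 + b * deriv H 0"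
    using DERIV_add[OF DERIV_cmult[OF g, of a] DERIV_cmult[OF h, of b]] by simp
  thus ?thesis using DERIV_cong_ev[OF refl assms(1) refl] by simp
qed

lemma iter_pd_lc:
  assumes "open_dom n U" "smooth_fun n U g" "smooth_fun n U h"
  shows "set is \<subseteq> {..<n} \<Longrightarrow> \<forall>x\<in>U. iter_pd is (\<lambda>x. a * g x + b * h x) x
      = a * iter_pd is g x + b * iter_pd is h x"
proof (induction "is")
  case Nil thus ?case by simp
next
  case (Cons i "is")
  show ?case
  proof
    fix x assume x: "x \<in> U"
    have i: "i < n" and s: "set is \<subseteq> {..<n}" using Cons.prems by auto
    have ev: "eventually (\<lambda>t. iter_pd is (\<lambda>x. a * g x + b * h x) (x(i := x i + t)) =
       a * iter_pd is g (x(i := x i + t)) + b * iter_pd is h (x(i := x i + t))) (nhds 0)"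
      using near_in_U[OF assms(1) x i] Cons.IH[OF s] by (auto elim: eventually_mono)
    have "DERIV (\<lambda>t. iter_pd is (\<lambda>x. a * g x + b * h x) (x(i := x i + t))) 0 :>
       a * deriv (\<lambda>t. iter_pd is g (x(i := x i + t))) 0 + b * deriv (\<lambda>t. iter_pd is h (x(i := x i + t))) 0"
      apply (rule deriv_step[OF ev])
      using assms(2,3) s i x unfolding smooth_fun_def by auto
    thus "iter_pd (i # is) (\<lambda>x. a * g x + b * h x) x = a * iter_pd (i # is) g x + b * iter_pd (i # is) h x"
      by (simp add: pd_def DERIV_imp_deriv)
  qed
qed

lemma smooth_lc:
  assumes "open_dom n U" "smooth_fun n U g" "smooth_fun n U h"
  shows "smooth_fun n U (\<lambda>x. a * g x + b * h x)"
  unfolding smooth_fun_def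
proof (intro allI impI)
  fix "is" assume s: "set is \<subseteq> {..<n}"
  show "continuous_on U (iter_pd is (\<lambda>x. a * g x + b * h x)) \<and>
        (\<forall>i<n. \<forall>x\<in>U. (\<lambda>t. iter_pd is (\<lambda>x. a * g x + b * h x) (x(i := x i + t))) differentiable at 0)"
  proof
  note E = iter_pd_lc[OF assms s, of a b]
  have "continuous_on U (\<lambda>x. a * iter_pd is g x + b * iter_pd is h x)"
    using assms(2,3) s unfolding smooth_fun_def by (auto intro!: continuous_intros)
  thus "continuous_on U (iter_pd is (\<lambda>x. a * g x + b * h x))"
    using continuous_on_cong[OF refl, of U "iter_pd is (\<lambda>x. a * g x + b * h x)"] E by auto
  show "\<forall>i<n. \<forall>x\<in>U. (\<lambda>t. iter_pd is (\<lambda>x. a * g x + b * h x) (x(i := x i + t))) differentiable at 0"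
  proof (intro allI impI ballI)
    fix i x assume i: "i < n" and x: "x \<in> U"
    have ev: "eventually (\<lambda>t. iter_pd is (\<lambda>x. a * g x + b * h x) (x(i := x i + t)) =
       a * iter_pd is g (x(i := x i + t)) + b * iter_pd is h (x(i := x i + t))) (nhds 0)"
      using near_in_U[OF assms(1) x i] E by (auto elim: eventually_mono)
    have "DERIV (\<lambda>t. iter_pd is (\<lambda>x. a * g x + b * h x) (x(i := x i + t))) 0 :>
       a * deriv (\<lambda>t. iter_pd is g (x(i := x i + t))) 0 + b * deriv (\<lambda>t. iter_pd is h (x(i := x i + t))) 0"
      apply (rule deriv_step[OF ev])
      using assms(2,3) s i x unfolding smooth_fun_def by auto
    thus "(\<lambda>t. iter_pd is (\<lambda>x. a * g x + b * h x) (x(i := x i + t))) differentiable at 0"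
      using real_differentiable_def by blast
  qed
  qed
qed

definition lc :: "real \<Rightarrow> real \<Rightarrow> 'a form \<Rightarrow> 'a form \<Rightarrow> 'a form" where
  "lc r s a b = (\<lambda>q z i. r * a q z i + s * b q z i)"

lemma fdiff_lc: "fdiff a b = lc 1 (-1) a b"
  by (simp add: fdiff_def lc_def fun_eq_iff)
lemma fadd_lc: "fadd a b = lc 1 1 a b"
  by (simp add: fadd_def lc_def fun_eq_iff)
lemma lc_fadd: "lc r s a b = fadd (fscale r a) (fscale s b)"
  by (simp add: fadd_def fscale_def lc_def fun_eq_iff)

lemma form_pullback_lc:
  "form_pullback k V n h (\<lambda>z i. r * c1 z i + s * c2 z i) =
   (\<lambda>z i. r * form_pullback k V n h c1 z i + s * form_pullback k V n h c2 z i)"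
  unfolding form_pullback_def fun_eq_iff
  by (auto simp: sum_distrib_left sum.distrib distrib_right mult.assoc)

lemma isf1: "is_form D \<omega> \<Longrightarrow> q \<notin> D \<Longrightarrow> \<omega> q = (\<lambda>_ _. 0)"
  unfolding is_form_def by (drule conjunct1) (erule allE, erule mp)
lemma isf2: "is_form D \<omega> \<Longrightarrow> (n, U, p) \<in> D \<Longrightarrow> x \<notin> U \<Longrightarrow> \<omega> (n, U, p) x = (\<lambda>_. 0)"
  by (simp add: is_form_def)
lemma isf3: "is_form D \<omega> \<Longrightarrow> (n, U, p) \<in> D \<Longrightarrow> n \<le> i \<Longrightarrow> \<omega> (n, U, p) x i = 0"
  by (simp add: is_form_def)
lemma isf4: "is_form D \<omega> \<Longrightarrow> (n, U, p) \<in> D \<Longrightarrow> i < n \<Longrightarrow> smooth_fun n U (\<lambda>x. \<omega> (n, U, p) x i)"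
  by (simp add: is_form_def)
lemma isf5: "is_form D \<omega> \<Longrightarrow> (n, U, p) \<in> D \<Longrightarrow> smooth_dom_map k V n U h \<Longrightarrow>
   \<omega> (k, V, restrict (p \<circ> h) V) = form_pullback k V n h (\<omega> (n, U, p))"
  unfolding is_form_def by simp

lemma is_formI:
  assumes "\<And>q. q \<notin> D \<Longrightarrow> \<omega> q = (\<lambda>_ _. 0)"
    "\<And>n U p x. (n, U, p) \<in> D \<Longrightarrow> x \<notin> U \<Longrightarrow> \<omega> (n, U, p) x = (\<lambda>_. 0)"
    "\<And>n U p x i. (n, U, p) \<in> D \<Longrightarrow> n \<le> i \<Longrightarrow> \<omega> (n, U, p) x i = 0"
    "\<And>n U p i. (n, U, p) \<in> D \<Longrightarrow> i < n \<Longrightarrow> smooth_fun n U (\<lambda>x. \<omega> (n, U, p) x i)"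
    "\<And>n U p k V h. (n, U, p) \<in> D \<Longrightarrow> smooth_dom_map k V n U h \<Longrightarrow>
       \<omega> (k, V, restrict (p \<circ> h) V) = form_pullback k V n h (\<omega> (n, U, p))"
  shows "is_form D \<omega>"
  unfolding is_form_def
  apply (intro conjI allI impI)
  subgoal by (rule assms(1))
  subgoal by (rule assms(2))
  subgoal by (rule assms(3))
  subgoal by (rule assms(4))
  subgoal by (rule assms(5)) (simp_all)
  done

lemma Omega_lc:
  assumes od: "\<And>n U p. (n, U, p) \<in> D \<Longrightarrow> open_dom n U"
    and a: "a \<in> Omega D" and b: "b \<in> Omega D"
  shows "lc r s a b \<in> Omega D"
proof -
  have A: "is_form D a" and B: "is_form D b" using a b by (auto simp: Omega_def)
  have "is_form D (lc r s a b)"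
  proof (rule is_formI)
    fix q assume "q \<notin> D" thus "lc r s a b q = (\<lambda>_ _. 0)"
      using isf1[OF A] isf1[OF B] by (simp add: lc_def)
  next
    fix n U p x assume np: "(n, U, p) \<in> D" "x \<notin> U"
    thus "lc r s a b (n, U, p) x = (\<lambda>_. 0)"
      using isf2[OF A] isf2[OF B] by (simp add: lc_def)
  next
    fix n U p x i assume np: "(n, U, p) \<in> D" "n \<le> i"
    thus "lc r s a b (n, U, p) x i = 0"
      using isf3[OF A] isf3[OF B] by (simp add: lc_def)
  next
    fix n U p i assume np: "(n, U, p) \<in> D" "i < n"
    thus "smooth_fun n U (\<lambda>x. lc r s a b (n, U, p) x i)"
      using isf4[OF A np] isf4[OF B np] smooth_lc[OF od[OF np(1)]] by (simp add: lc_def)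
  next
    fix n U p k V h assume "(n, U, p) \<in> D" "smooth_dom_map k V n U h"
    thus "lc r s a b (k, V, restrict (p \<circ> h) V) = form_pullback k V n h (lc r s a b (n, U, p))"
      using isf5[OF A] isf5[OF B] unfolding lc_def
      by (simp add: form_pullback_lc[symmetric])
  qed
  thus ?thesis by (simp add: Omega_def)
qed

lemma zero_Omega: "zero_form \<in> Omega D"
proof -
  have z: "iter_pd is (\<lambda>_. 0) = (\<lambda>_. 0)" for "is"
    by (induction "is") (simp_all add: pd_def fun_eq_iff)
  have "smooth_fun n U (\<lambda>_. 0)" for n U
    by (simp add: smooth_fun_def z)
  thus ?thesis
    by (simp add: Omega_def is_form_def zero_form_def form_pullback_def fun_eq_iff)
qed

lemma Omega_at_sub: "Omega_at D x \<subseteq> Omega D"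
  by (auto simp: Omega_at_def)

lemma Omega_at_lc:
  assumes od: "\<And>n U p. (n, U, p) \<in> D \<Longrightarrow> open_dom n U"
    and a: "a \<in> Omega_at D x" and b: "b \<in> Omega_at D x"
  shows "lc r s a b \<in> Omega_at D x"
proof -
  have ab: "a \<in> Omega D" "b \<in> Omega D" using a b by (auto simp: Omega_at_def)
  have "lc r s a b \<in> Omega D" using od ab by (rule Omega_lc)
  thus ?thesis using a b unfolding Omega_at_def by (auto simp: lc_def fun_eq_iff)
qed

lemma zero_Omega_at: "zero_form \<in> Omega_at D x"
  using zero_Omega by (auto simp: Omega_at_def zero_form_def)

lemma pb_lc: "pb \<phi> D (lc r s a b) = lc r s (pb \<phi> D a) (pb \<phi> D b)"
  by (auto simp: pb_def lc_def fun_eq_iff split: prod.split)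

lemma diff_od:
  assumes "diffeology X D" "(n, U, p) \<in> D" shows "open_dom n U"
  using assms by (auto simp: diffeology_def wf_param_def)

lemma diff_ext:
  assumes "diffeology X D" "(n, U, p) \<in> D" shows "restrict p U = p"
  using assms by (auto simp: diffeology_def wf_param_def extensional_restrict)

lemma sub_od:
  assumes "diffeology X D" "(n, U, p) \<in> sub_diff D Y" shows "open_dom n U"
  using assms diff_od by (auto simp: sub_diff_def)

lemma pb_id_eq:
  assumes "diffeology X D"
  shows "pb id (sub_diff D Y) \<omega> = (\<lambda>q. if q \<in> sub_diff D Y then \<omega> q else (\<lambda>_ _. 0))"
proof -
  have "\<omega> (n, U, restrict p U) = \<omega> (n, U, p)" if "(n, U, p) \<in> sub_diff D Y" for n U p
    using diff_ext[OF assms, of n U p] that by (simp add: sub_diff_def)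
  thus ?thesis by (auto simp: pb_def fun_eq_iff split: prod.split)
qed

lemma sub_closed:
  assumes "diffeology X D" "(n, U, p) \<in> sub_diff D Y" "smooth_dom_map k V n U h"
  shows "(k, V, restrict (p \<circ> h) V) \<in> sub_diff D Y"
proof -
  have "(n, U, p) \<in> D" "p ` U \<subseteq> Y" using assms(2) by (auto simp: sub_diff_def)
  moreover have "h ` V \<subseteq> U" using assms(3) by (simp add: smooth_dom_map_def)
  moreover have "(k, V, restrict (p \<circ> h) V) \<in> D"
    using assms(1,3) \<open>(n, U, p) \<in> D\<close> unfolding diffeology_def by blast
  ultimately show ?thesis unfolding sub_diff_def by auto
qed

lemma pb_id_Omega:
  assumes d: "diffeology X D" and w: "\<omega> \<in> Omega D"
  shows "pb id (sub_diff D Y) \<omega> \<in> Omega (sub_diff D Y)"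
proof -
  have W: "is_form D \<omega>" using w by (simp add: Omega_def)
  have sD: "\<And>n U p. (n, U, p) \<in> sub_diff D Y \<Longrightarrow> (n, U, p) \<in> D" by (simp add: sub_diff_def)
  have "is_form (sub_diff D Y) (\<lambda>q. if q \<in> sub_diff D Y then \<omega> q else (\<lambda>_ _. 0))"
  proof (rule is_formI)
    fix n U p x assume "(n, U, p) \<in> sub_diff D Y" "x \<notin> U"
    thus "(if (n, U, p) \<in> sub_diff D Y then \<omega> (n, U, p) else (\<lambda>_ _. 0)) x = (\<lambda>_. 0)"
      using isf2[OF W sD] by simp
  next
    fix n U p x i assume "(n, U, p) \<in> sub_diff D Y" "n \<le> i"
    thus "(if (n, U, p) \<in> sub_diff D Y then \<omega> (n, U, p) else (\<lambda>_ _. 0)) x i = 0"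
      using isf3[OF W sD] by simp
  next
    fix n U p i assume "(n, U, p) \<in> sub_diff D Y" "i < n"
    thus "smooth_fun n U (\<lambda>x. (if (n, U, p) \<in> sub_diff D Y then \<omega> (n, U, p) else (\<lambda>_ _. 0)) x i)"
      using isf4[OF W sD] by simp
  next
    fix n U p k V h assume a: "(n, U, p) \<in> sub_diff D Y" "smooth_dom_map k V n U h"
    hence "(k, V, restrict (p \<circ> h) V) \<in> sub_diff D Y" using sub_closed[OF d] by blast
    thus "(if (k, V, restrict (p \<circ> h) V) \<in> sub_diff D Y then \<omega> (k, V, restrict (p \<circ> h) V) else (\<lambda>_ _. 0)) =
       form_pullback k V n h ((if (n, U, p) \<in> sub_diff D Y then \<omega> (n, U, p) else (\<lambda>_ _. 0)))"
      using isf5[OF W sD[OF a(1)] a(2)] a(1) by simp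
  qed simp
  thus ?thesis using pb_id_eq[OF d] by (simp add: Omega_def)
qed

lemma pb_id_Omega_at:
  assumes d: "diffeology X D" and w: "\<omega> \<in> Omega_at D x"
  shows "pb id (sub_diff D Y) \<omega> \<in> Omega_at (sub_diff D Y) x"
  using pb_id_Omega[OF d, of \<omega> Y] w pb_id_eq[OF d, of Y \<omega>]
  by (auto simp: Omega_at_def sub_diff_def)

lemma flin_empty: "flin {} c = zero_form"
  by (simp add: flin_def zero_form_def)
lemma flin_insert: "finite B \<Longrightarrow> b \<notin> B \<Longrightarrow> flin (insert b B) c = lc (c b) 1 b (flin B c)"
  by (simp add: flin_def lc_def fun_eq_iff)
lemma flin_lin: "flin B (\<lambda>x. r * c x + s * d x) = lc r s (flin B c) (flin B d)"
  by (simp add: flin_def lc_def fun_eq_iff sum_distrib_left sum.distrib distrib_right mult.assoc)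
lemma flin_zero: "flin B (\<lambda>_. 0) = zero_form"
  by (simp add: flin_def zero_form_def)
lemma flin_cong: "b \<notin> B \<Longrightarrow> flin B (c(b := r)) = flin B c"
  unfolding flin_def by (intro ext sum.cong) auto

lemma lc_apply: "lc r s a b q z i = r * a q z i + s * b q z i"
  by (simp add: lc_def)

lemma id_e1: "lc 1 (-1) w (lc 1 sc kw uo) = lc 1 (-sc) (lc 1 (-1) w kw) uo"
  unfolding lc_def by (intro ext) (simp add: algebra_simps)
lemma id_dec: "c0b = t * cub \<Longrightarrow> lc 1 (-1) (lc 1 (-t) k0 u) (lc 1 (-t) f0 fu) =
   lc 1 (-t) (lc 1 (-1) k0 (lc (c0b) 1 b f0)) (lc 1 (-1) u (lc cub 1 b fu))"
  unfolding lc_def by (intro ext) (simp add: algebra_simps)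
lemma id_k0: "k0 = lc 1 t (lc 1 t (lc 1 (-t) k0 u) ku) (lc 1 (-1) u ku)"
  unfolding lc_def by (intro ext) (simp add: algebra_simps)

lemma id_ks: "lc 1 (-1) (lc r s k1 k2) (lc r s f1 f2) = lc r s (lc 1 (-1) k1 f1) (lc 1 (-1) k2 f2)"
  unfolding lc_def by (intro ext) (simp add: algebra_simps)

locale pip =
  fixes V N K :: "'a form set" and g :: "'a form \<Rightarrow> 'a form \<Rightarrow> real"
  assumes V: "\<And>a b r s. a \<in> V \<Longrightarrow> b \<in> V \<Longrightarrow> lc r s a b \<in> V"
  and K: "\<And>a b r s. a \<in> K \<Longrightarrow> b \<in> K \<Longrightarrow> lc r s a b \<in> K"
  and N: "\<And>a b r s. a \<in> N \<Longrightarrow> b \<in> N \<Longrightarrow> lc r s a b \<in> N"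
  and z: "zero_form \<in> N" and NK: "N \<subseteq> K" and KV: "K \<subseteq> V"
  and gs: "\<And>a b. a \<in> V \<Longrightarrow> b \<in> V \<Longrightarrow> g a b = g b a"
  and gl: "\<And>a b c r s. a \<in> V \<Longrightarrow> b \<in> V \<Longrightarrow> c \<in> V \<Longrightarrow> g (lc r s a b) c = r * g a c + s * g b c"
  and gN: "\<And>a b. a \<in> N \<Longrightarrow> b \<in> V \<Longrightarrow> g a b = 0"
  and gdef: "\<And>a. a \<in> V \<Longrightarrow> g a a = 0 \<Longrightarrow> a \<in> N"
begin

lemma gr: assumes "a \<in> V" "b \<in> V" "c \<in> V" shows "g c (lc r s a b) = r * g c a + s * g c b"
proof -
  have "lc r s a b \<in> V" using V[OF assms(1,2)] .
  hence "g c (lc r s a b) = g (lc r s a b) c" using gs[OF assms(3)] by simp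
  also have "\<dots> = r * g a c + s * g b c" using gl[OF assms] .
  finally show ?thesis using gs[OF assms(1,3)] gs[OF assms(2,3)] by simp
qed

definition KS :: "'a form set \<Rightarrow> 'a form set" where
  "KS B = {k \<in> K. \<exists>c. lc 1 (-1) k (flin B c) \<in> N}"

lemma KS_K: "KS B \<subseteq> K" by (auto simp: KS_def)

lemma N_KS: "N \<subseteq> KS B"
proof
  fix n assume n: "n \<in> N"
  have "lc 1 (-1) n (flin B (\<lambda>_. 0)) = n"
    by (simp add: flin_zero lc_def zero_form_def)
  hence "lc 1 (-1) n (flin B (\<lambda>_. 0)) \<in> N" using n by simp
  thus "n \<in> KS B" using n NK unfolding KS_def by blast
qed

lemma KS_lc:
  assumes "k1 \<in> KS B" "k2 \<in> KS B" shows "lc r s k1 k2 \<in> KS B"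
proof -
  obtain c1 c2 where c: "lc 1 (-1) k1 (flin B c1) \<in> N" "lc 1 (-1) k2 (flin B c2) \<in> N"
    and k: "k1 \<in> K" "k2 \<in> K" using assms unfolding KS_def by auto
  have "lc 1 (-1) (lc r s k1 k2) (flin B (\<lambda>x. r * c1 x + s * c2 x)) =
        lc r s (lc 1 (-1) k1 (flin B c1)) (lc 1 (-1) k2 (flin B c2))"
    unfolding flin_lin by (rule id_ks)
  hence "lc 1 (-1) (lc r s k1 k2) (flin B (\<lambda>x. r * c1 x + s * c2 x)) \<in> N" using N[OF c] by simp
  thus ?thesis using K[OF k] unfolding KS_def by blast
qed

lemma KS_mono:
  assumes "finite B" "b \<notin> B" shows "KS B \<subseteq> KS (insert b B)"
proof
  fix k assume "k \<in> KS B"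
  then obtain c where c: "lc 1 (-1) k (flin B c) \<in> N" and k: "k \<in> K" unfolding KS_def by auto
  have "flin (insert b B) (c(b := 0)) = flin B c"
    using flin_insert[OF assms, of "c(b := 0)"] flin_cong[OF assms(2)]
    by (simp add: lc_def fun_eq_iff)
  hence "lc 1 (-1) k (flin (insert b B) (c(b := 0))) \<in> N" using c by simp
  thus "k \<in> KS (insert b B)" using k unfolding KS_def by blast
qed

lemma main_claim:
  assumes "finite B"
  shows "B \<subseteq> V \<Longrightarrow> \<forall>w\<in>V. \<exists>k\<in>KS B. \<forall>k0\<in>KS B. g (lc 1 (-1) w k) k0 = 0"
  using assms
proof (induction B rule: finite_induct)
  case empty
  show ?case
  proof
    fix w assume w: "w \<in> V"
    have zK: "zero_form \<in> KS {}" using z N_KS by auto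
    have "lc 1 (-1) w zero_form = w" by (simp add: lc_def zero_form_def)
    moreover have "\<forall>k0\<in>KS {}. g w k0 = 0"
    proof
      fix k0 assume "k0 \<in> KS {}"
      then obtain c where "lc 1 (-1) k0 (flin {} c) \<in> N" "k0 \<in> K" unfolding KS_def by auto
      moreover have "lc 1 (-1) k0 (flin {} c) = k0" by (simp add: flin_empty lc_def zero_form_def)
      ultimately have "k0 \<in> N" by simp
      hence "g k0 w = 0" using gN w by blast
      moreover have "k0 \<in> V" using \<open>k0 \<in> N\<close> NK KV by blast
      ultimately show "g w k0 = 0" using gs[OF w] by simp
    qed
    ultimately show "\<exists>k\<in>KS {}. \<forall>k0\<in>KS {}. g (lc 1 (-1) w k) k0 = 0" using zK by metis
  qed
next
  case (insert b B)
  have IH: "\<forall>w\<in>V. \<exists>k\<in>KS B. \<forall>k0\<in>KS B. g (lc 1 (-1) w k) k0 = 0"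
    using insert by auto
  have KSV: "\<And>B. KS B \<subseteq> V" using KS_K KV by blast
  show ?case
  proof
    fix w assume w: "w \<in> V"
    obtain kw where kw: "kw \<in> KS B" and ow: "\<forall>k0\<in>KS B. g (lc 1 (-1) w kw) k0 = 0"
      using IH w by blast
    show "\<exists>k\<in>KS (insert b B). \<forall>k0\<in>KS (insert b B). g (lc 1 (-1) w k) k0 = 0"
    proof (cases "KS (insert b B) \<subseteq> KS B")
      case True
      thus ?thesis using kw ow KS_mono[OF insert(1,2)] by blast
    next
      case False
      then obtain u where u: "u \<in> KS (insert b B)" "u \<notin> KS B" by blast
      have uV: "u \<in> V" using u KSV by blast
      obtain ku where ku: "ku \<in> KS B" and ou: "\<forall>k0\<in>KS B. g (lc 1 (-1) u ku) k0 = 0"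
        using IH uV by blast
      define uo where "uo = lc 1 (-1) u ku"
      have kuI: "ku \<in> KS (insert b B)" using ku KS_mono[OF insert(1,2)] by blast
      have uoI: "uo \<in> KS (insert b B)" unfolding uo_def using KS_lc[OF u(1) kuI] .
      have uoV: "uo \<in> V" using uoI KSV by blast
      have nz: "g uo uo \<noteq> 0"
      proof
        assume "g uo uo = 0"
        hence "uo \<in> KS B" using gdef uoV N_KS by blast
        hence "lc 1 1 uo ku \<in> KS B" using KS_lc[OF _ ku] by blast
        moreover have "lc 1 1 uo ku = u" by (simp add: uo_def lc_def fun_eq_iff)
        ultimately show False using u(2) by simp
      qed
      define wo where "wo = lc 1 (-1) w kw"
      have woV: "wo \<in> V" unfolding wo_def using V[OF w, of kw] kw KSV by blast
      define sc where "sc = g wo uo / g uo uo"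
      define k where "k = lc 1 sc kw uo"
      have kI: "k \<in> KS (insert b B)" unfolding k_def
        using KS_lc[OF _ uoI, of kw] kw KS_mono[OF insert(1,2)] by blast
      have e1: "lc 1 (-1) w k = lc 1 (-sc) wo uo"
        unfolding k_def wo_def by (rule id_e1)
      have decomp: "\<exists>t k1. k1 \<in> KS B \<and> k0 = lc 1 t k1 uo" if k0: "k0 \<in> KS (insert b B)" for k0
      proof -
        obtain cu where cu: "lc 1 (-1) u (flin (insert b B) cu) \<in> N" and uK: "u \<in> K"
          using u(1) unfolding KS_def by auto
        obtain c0 where c0: "lc 1 (-1) k0 (flin (insert b B) c0) \<in> N" and k0K: "k0 \<in> K"
          using k0 unfolding KS_def by auto
        have cub: "cu b \<noteq> 0"
        proof
          assume "cu b = 0"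
          hence "flin (insert b B) cu = flin B cu"
            using flin_insert[OF insert(1,2)] by (simp add: lc_def fun_eq_iff)
          thus False using cu uK u(2) unfolding KS_def by auto
        qed
        define t where "t = c0 b / cu b"
        have tb: "c0 b = t * cu b" using cub by (simp add: t_def)
        define m where "m = lc 1 (-t) k0 u"
        have "lc 1 (-1) m (flin B (\<lambda>x. 1 * c0 x + (-t) * cu x)) =
              lc 1 (-t) (lc 1 (-1) k0 (flin (insert b B) c0)) (lc 1 (-1) u (flin (insert b B) cu))"
          unfolding m_def flin_lin flin_insert[OF insert(1,2)] by (rule id_dec[OF tb])
        moreover have "m \<in> K" unfolding m_def using K[OF k0K uK] .
        ultimately have mK: "m \<in> KS B" using N[OF c0 cu] unfolding KS_def by (metis (mono_tags, lifting) mem_Collect_eq)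
        have "lc 1 t m ku \<in> KS B" using KS_lc[OF mK ku] .
        moreover have "k0 = lc 1 t (lc 1 t m ku) uo"
          unfolding m_def uo_def by (rule id_k0)
        ultimately show ?thesis by blast
      qed
      show ?thesis
      proof (intro bexI[OF _ kI] ballI)
        fix k0 assume "k0 \<in> KS (insert b B)"
        then obtain t k1 where k1: "k1 \<in> KS B" and k0: "k0 = lc 1 t k1 uo" using decomp by blast
        have k1V: "k1 \<in> V" using k1 KSV by blast
        have a1: "g wo k1 = 0" using ow k1 by (simp add: wo_def)
        have a2: "g uo k1 = 0" using ou k1 by (simp add: uo_def)
        have a3: "sc * g uo uo = g wo uo" using nz by (simp add: sc_def)
        have "g (lc 1 (-1) w k) k0 = g (lc 1 (-sc) wo uo) (lc 1 t k1 uo)" using e1 k0 by simp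
        also have "\<dots> = g wo (lc 1 t k1 uo) - sc * g uo (lc 1 t k1 uo)"
          using gl[OF woV uoV V[OF k1V uoV]] by simp
        also have "\<dots> = (g wo k1 + t * g wo uo) - sc * (g uo k1 + t * g uo uo)"
          using gr[OF k1V uoV woV] gr[OF k1V uoV uoV] by simp
        also have "\<dots> = 0" using a1 a2 a3 by (simp add: algebra_simps)
        finally show "g (lc 1 (-1) w k) k0 = 0" .
      qed
    qed
  qed
qed

lemma proj_exists:
  assumes "finite B" "B \<subseteq> V" "\<And>w. w \<in> V \<Longrightarrow> \<exists>c. lc 1 (-1) w (flin B c) \<in> N" "w \<in> V"
  shows "\<exists>w'. w' \<in> V \<and> fdiff w w' \<in> K \<and> (\<forall>k\<in>K. g w' k = 0)"
proof -
  have "KS B = K" using assms(3) KV KS_K unfolding KS_def by blast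
  then obtain k where k: "k \<in> K" "\<forall>k0\<in>K. g (lc 1 (-1) w k) k0 = 0"
    using main_claim[OF assms(1,2)] assms(4) by force
  have "fdiff w (lc 1 (-1) w k) = k" by (simp add: fdiff_def lc_def fun_eq_iff)
  moreover have "lc 1 (-1) w k \<in> V" using V[OF assms(4), of k] k KV by blast
  ultimately show ?thesis using k by metis
qed

end

lemma fdiff_self: "fdiff a a = zero_form"
  by (simp add: fdiff_def zero_form_def)

lemma lc_fscale: "fscale r a = lc r 0 a a"
  by (simp add: fscale_def lc_def)

lemma id_pc: "fdiff A Bq = lc 1 1 (lc 1 (-1) (fdiff P Qb) (lc 1 (-1) P A)) (lc 1 (-1) Qb Bq)"
  unfolding lc_def fdiff_def by (intro ext) (simp add: algebra_simps)

lemma id_sp: "d = lc 1 1 (fdiff d d') d'"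
  unfolding lc_def fdiff_def by (intro ext) (simp add: algebra_simps)

lemma ker_lc:
  assumes d: "diffeology X D" and a: "a \<in> ker_i D Y x" and b: "b \<in> ker_i D Y x"
  shows "lc r s a b \<in> ker_i D Y x"
proof -
  have od: "\<And>n U p. (n, U, p) \<in> D \<Longrightarrow> open_dom n U" using diff_od[OF d] by blast
  have ods: "\<And>n U p. (n, U, p) \<in> sub_diff D Y \<Longrightarrow> open_dom n U" using sub_od[OF d] by blast
  have ab: "a \<in> Omega D" "b \<in> Omega D" using a b by (auto simp: ker_i_def)
  have "lc r s a b \<in> Omega D" using od ab by (rule Omega_lc)
  moreover have "pb id (sub_diff D Y) (lc r s a b) \<in> Omega_at (sub_diff D Y) x"
    unfolding pb_lc using ods a[unfolded ker_i_def, THEN CollectD, THEN conjunct2]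
      b[unfolded ker_i_def, THEN CollectD, THEN conjunct2] by (rule Omega_at_lc)
  ultimately show ?thesis by (simp add: ker_i_def)
qed

lemma pip_inst:
  assumes d: "diffeology X D" and sp: "scalar_prod_Lambda D x g"
  shows "pip (Omega D) (Omega_at D x) (ker_i D Y x) g"
proof -
  have od: "\<And>n U p. (n, U, p) \<in> D \<Longrightarrow> open_dom n U" using diff_od[OF d] by blast
  have sc: "\<And>r a. a \<in> Omega D \<Longrightarrow> fscale r a \<in> Omega D"
    unfolding lc_fscale using od by (rule Omega_lc)
  show ?thesis
  proof
    fix a b r s assume "a \<in> Omega D" "b \<in> Omega D"
    thus "lc r s a b \<in> Omega D" using od by (intro Omega_lc)
  next
    fix a b r s assume "a \<in> ker_i D Y x" "b \<in> ker_i D Y x"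
    thus "lc r s a b \<in> ker_i D Y x" using ker_lc[OF d] by blast
  next
    fix a b r s assume "a \<in> Omega_at D x" "b \<in> Omega_at D x"
    thus "lc r s a b \<in> Omega_at D x" using od by (intro Omega_at_lc)
  next
    show "zero_form \<in> Omega_at D x" by (rule zero_Omega_at)
  next
    show "Omega_at D x \<subseteq> ker_i D Y x"
    proof
      fix \<omega> assume w: "\<omega> \<in> Omega_at D x"
      have "\<omega> \<in> Omega D" using w by (simp add: Omega_at_def)
      thus "\<omega> \<in> ker_i D Y x" using pb_id_Omega_at[OF d w, of Y] unfolding ker_i_def by blast
    qed
  next
    show "ker_i D Y x \<subseteq> Omega D" unfolding ker_i_def by blast
  next
    fix a b assume "a \<in> Omega D" "b \<in> Omega D"
    thus "g a b = g b a" using sp unfolding scalar_prod_Lambda_def by blast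
  next
    fix a b c r s assume abc: "a \<in> Omega D" "b \<in> Omega D" "c \<in> Omega D"
    have "g (lc r s a b) c = g (fadd (fscale r a) (fscale s b)) c" by (simp add: lc_fadd)
    also have "\<dots> = g (fscale r a) c + g (fscale s b) c"
      using sp sc[OF abc(1)] sc[OF abc(2)] abc(3) unfolding scalar_prod_Lambda_def by blast
    also have "\<dots> = r * g a c + s * g b c"
      using sp abc unfolding scalar_prod_Lambda_def by simp
    finally show "g (lc r s a b) c = r * g a c + s * g b c" .
  next
    fix a b assume "a \<in> Omega_at D x" "b \<in> Omega D"
    thus "g a b = 0" using sp unfolding scalar_prod_Lambda_def by blast
  next
    fix a assume "a \<in> Omega D" "g a a = 0"
    thus "a \<in> Omega_at D x" using sp unfolding scalar_prod_Lambda_def by blast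
  qed
qed

lemma proj_ex:
  assumes d: "diffeology X D" and sp: "scalar_prod_Lambda D x g" and fd: "fin_dim_Lambda D x"
    and w: "w \<in> Omega D"
  shows "\<exists>w'. is_orth_proj D g (ker_i D Y x) w w'"
proof -
  interpret pip "Omega D" "Omega_at D x" "ker_i D Y x" g by (rule pip_inst[OF d sp])
  obtain B where B: "finite B" "B \<subseteq> Omega D" "\<forall>\<omega>\<in>Omega D. \<exists>c. mod_eq D x \<omega> (flin B c)"
    using fd unfolding fin_dim_Lambda_def by blast
  have "\<exists>c. lc 1 (-1) v (flin B c) \<in> Omega_at D x" if "v \<in> Omega D" for v
    using B(3) that unfolding mod_eq_def fdiff_lc by blast
  from proj_exists[OF B(1,2) this w] show ?thesis unfolding is_orth_proj_def by blast
qed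

theorem mainTheorem6:
  fixes X1 :: "'a set" and D1 :: "'a plot set"
    and X2 :: "'b set" and D2 :: "'b plot set"
    and Y :: "'a set" and f :: "'a \<Rightarrow> 'b" and y :: 'a
    and g1 :: "'a form \<Rightarrow> 'a form \<Rightarrow> real" and g2 :: "'b form \<Rightarrow> 'b form \<Rightarrow> real"
    and \<alpha>1 :: "'a form" and \<alpha>2 :: "'b form"
  assumes "diffeology X1 D1" and "diffeology X2 D2"
    and "Y \<subseteq> X1" and "f ` Y \<subseteq> X2"
    and "diffeomorphism Y (sub_diff D1 Y) (f ` Y) (sub_diff D2 (f ` Y)) f"
    and "pb id (sub_diff D1 Y) ` Omega D1 =
         (pb f (sub_diff D1 Y) \<circ> pb id (sub_diff D2 (f ` Y))) ` Omega D2"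
    and "y \<in> Y"
    and "fin_dim_Lambda D1 y" and "fin_dim_Lambda D2 (f y)"
    and "scalar_prod_Lambda D1 y g1" and "scalar_prod_Lambda D2 (f y) g2"
    and "compatible_sp D1 D2 Y f y g1 g2"
    and "\<alpha>1 \<in> Omega D1" and "\<alpha>2 \<in> Omega D2"
  shows "compatible_functionals D1 D2 Y f y g1 g2 (g1 \<alpha>1) (g2 \<alpha>2) \<longleftrightarrow>
         compatible_forms D1 D2 Y f y \<alpha>1 \<alpha>2"
proof -
  note d1 = assms(1) and d2 = assms(2) and img = assms(6)
  define S1 where "S1 = sub_diff D1 Y"
  define S2 where "S2 = sub_diff D2 (f ` Y)"
  define Q where "Q = (\<lambda>\<omega>. pb f S1 (pb id S2 \<omega>))"
  have eqQ: "\<And>\<omega>. pb f S1 (pb id S2 \<omega>) = Q \<omega>" by (simp add: Q_def)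
  define K1 where "K1 = ker_i D1 Y y"
  define K2 where "K2 = ker_i D2 (f ` Y) (f y)"
  have ods1: "\<And>n U p. (n, U, p) \<in> S1 \<Longrightarrow> open_dom n U" unfolding S1_def using sub_od[OF d1] by blast
  have img': "pb id S1 ` Omega D1 = Q ` Omega D2" using img by (simp add: S1_def S2_def Q_def o_def)
  have ex1: "\<exists>\<beta>\<in>Omega D1. pb id S1 \<beta> = Q \<omega>" if "\<omega> \<in> Omega D2" for \<omega>
  proof -
    have "Q \<omega> \<in> pb id S1 ` Omega D1" unfolding img' using that by (rule imageI)
    then obtain \<beta> where "\<beta> \<in> Omega D1" "Q \<omega> = pb id S1 \<beta>" by (rule imageE)
    thus ?thesis by auto
  qed
  have ex2: "\<exists>\<omega>\<in>Omega D2. pb id S1 \<beta> = Q \<omega>" if "\<beta> \<in> Omega D1" for \<beta>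
  proof -
    have "pb id S1 \<beta> \<in> Q ` Omega D2" unfolding img'[symmetric] using that by (rule imageI)
    then obtain \<omega> where "\<omega> \<in> Omega D2" "pb id S1 \<beta> = Q \<omega>" by (rule imageE)
    thus ?thesis by auto
  qed
  have P_Omega: "pb id S1 \<beta> \<in> Omega S1" if "\<beta> \<in> Omega D1" for \<beta>
    unfolding S1_def using pb_id_Omega[OF d1 that] .
  have Q_Omega: "Q \<omega> \<in> Omega S1" if "\<omega> \<in> Omega D2" for \<omega>
    using ex1[OF that] P_Omega by metis
  have sm: "smooth_map Y S1 (f ` Y) S2 f"
    using assms(5) unfolding diffeomorphism_def S1_def S2_def by blast
  have Q_at: "Q \<omega> \<in> Omega_at S1 y" if w: "\<omega> \<in> Omega D2" and wa: "pb id S2 \<omega> \<in> Omega_at S2 (f y)" for \<omega>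
    unfolding Omega_at_def
  proof (intro CollectI conjI allI impI)
    show "Q \<omega> \<in> Omega S1" using Q_Omega[OF w] .
    fix n U p assume np: "(n, U, p) \<in> S1 \<and> origin \<in> U \<and> p origin = y"
    have s2: "(n, U, restrict (f \<circ> p) U) \<in> S2" using sm np unfolding smooth_map_def by blast
    have "Q \<omega> (n, U, p) = pb id S2 \<omega> (n, U, restrict (f \<circ> p) U)"
      using np by (simp add: Q_def pb_def)
    moreover have "restrict (f \<circ> p) U origin = f y" using np by simp
    ultimately show "Q \<omega> (n, U, p) origin = (\<lambda>_. 0)"
      using wa s2 np unfolding Omega_at_def by auto
  qed
  have compat_refl: "compatible_forms D1 D2 Y f y \<beta> \<omega>"
    if "\<beta> \<in> Omega D1" "\<omega> \<in> Omega D2" "pb id S1 \<beta> = Q \<omega>" for \<beta> \<omega>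
    using that P_Omega[OF that(1)] zero_Omega_at[of S1 y]
    unfolding compatible_forms_def mod_eq_def S1_def[symmetric] S2_def[symmetric] eqQ
    by (simp add: fdiff_self)
  have proj_compat: "compatible_forms D1 D2 Y f y b1' b2'"
    if c: "compatible_forms D1 D2 Y f y b1 b2" and p1: "is_orth_proj D1 g1 K1 b1 b1'"
      and p2: "is_orth_proj D2 g2 K2 b2 b2'" for b1 b2 b1' b2'
  proof -
    have b1: "b1 \<in> Omega D1" and b2: "b2 \<in> Omega D2"
      and me: "mod_eq S1 y (pb id S1 b1) (Q b2)"
      using c unfolding compatible_forms_def S1_def[symmetric] S2_def[symmetric] eqQ by auto
    have b1': "b1' \<in> Omega D1" and k1: "fdiff b1 b1' \<in> K1" using p1 unfolding is_orth_proj_def by auto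
    have b2': "b2' \<in> Omega D2" and k2: "fdiff b2 b2' \<in> K2" using p2 unfolding is_orth_proj_def by auto
    have t1: "fdiff (pb id S1 b1) (Q b2) \<in> Omega_at S1 y" using me unfolding mod_eq_def by blast
    have t2: "lc 1 (-1) (pb id S1 b1) (pb id S1 b1') \<in> Omega_at S1 y"
      using k1 unfolding K1_def ker_i_def S1_def[symmetric] fdiff_lc by (simp add: pb_lc)
    have k2': "fdiff b2 b2' \<in> Omega D2" "pb id S2 (fdiff b2 b2') \<in> Omega_at S2 (f y)"
      using k2 unfolding K2_def ker_i_def S2_def[symmetric] by auto
    have t3: "lc 1 (-1) (Q b2) (Q b2') \<in> Omega_at S1 y"
      using Q_at[OF k2'] unfolding Q_def fdiff_lc pb_lc .
    have "fdiff (pb id S1 b1') (Q b2') \<in> Omega_at S1 y"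
      unfolding id_pc[of "pb id S1 b1'" "Q b2'" "pb id S1 b1" "Q b2"]
      by (intro Omega_at_lc ods1 t1 t2 t3) auto
    thus ?thesis using b1' b2' P_Omega[OF b1'] Q_Omega[OF b2']
      unfolding compatible_forms_def mod_eq_def S1_def[symmetric] S2_def[symmetric] eqQ
      by simp
  qed
  have csp: "g1 \<omega>1 \<mu>1 = g2 \<omega>2 \<mu>2" if "compatible_forms D1 D2 Y f y \<omega>1 \<omega>2"
    "compatible_forms D1 D2 Y f y \<mu>1 \<mu>2" for \<omega>1 \<omega>2 \<mu>1 \<mu>2
    using assms(12) that unfolding compatible_sp_def by blast
  show ?thesis
  proof
    assume cf: "compatible_functionals D1 D2 Y f y g1 g2 (g1 \<alpha>1) (g2 \<alpha>2)"
    interpret P1: pip "Omega D1" "Omega_at D1 y" K1 g1 unfolding K1_def by (rule pip_inst[OF d1 assms(10)])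
    obtain \<beta>1 where \<beta>1: "\<beta>1 \<in> Omega D1" "pb id S1 \<beta>1 = Q \<alpha>2" using ex1[OF assms(14)] by blast
    have c\<beta>: "compatible_forms D1 D2 Y f y \<beta>1 \<alpha>2" using compat_refl[OF \<beta>1(1) assms(14) \<beta>1(2)] .
    define \<delta> where "\<delta> = fdiff \<alpha>1 \<beta>1"
    have \<delta>L: "\<delta> = lc 1 (-1) \<alpha>1 \<beta>1" unfolding \<delta>_def fdiff_lc ..
    have \<delta>O: "\<delta> \<in> Omega D1" unfolding \<delta>L using assms(13) \<beta>1(1) by (rule P1.V)
    obtain \<delta>' where p\<delta>: "is_orth_proj D1 g1 K1 \<delta> \<delta>'"
      using proj_ex[OF d1 assms(10) assms(8) \<delta>O, of Y] unfolding K1_def by blast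
    have \<delta>'O: "\<delta>' \<in> Omega D1" and k\<delta>: "fdiff \<delta> \<delta>' \<in> K1" and o\<delta>: "\<forall>k\<in>K1. g1 \<delta>' k = 0"
      using p\<delta> unfolding is_orth_proj_def by auto
    obtain \<gamma>2 where \<gamma>2: "\<gamma>2 \<in> Omega D2" "pb id S1 \<delta>' = Q \<gamma>2" using ex2[OF \<delta>'O] by blast
    have c\<delta>: "compatible_forms D1 D2 Y f y \<delta>' \<gamma>2" using compat_refl[OF \<delta>'O \<gamma>2(1) \<gamma>2(2)] .
    obtain \<gamma>2' where p\<gamma>: "is_orth_proj D2 g2 K2 \<gamma>2 \<gamma>2'"
      using proj_ex[OF d2 assms(11) assms(9) \<gamma>2(1), of "f ` Y"] unfolding K2_def by blast
    have self: "is_orth_proj D1 g1 K1 \<delta>' \<delta>'"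
      unfolding is_orth_proj_def fdiff_self using \<delta>'O o\<delta> P1.z P1.NK by blast
    have F: "g1 \<alpha>1 \<delta>' = g2 \<alpha>2 \<gamma>2'"
      using cf c\<delta> self p\<gamma> unfolding compatible_functionals_def K1_def K2_def by blast
    have cc: "compatible_forms D1 D2 Y f y \<delta>' \<gamma>2'" using proj_compat[OF c\<delta> self p\<gamma>] .
    have G: "g1 \<beta>1 \<delta>' = g2 \<alpha>2 \<gamma>2'" using csp[OF c\<beta> cc] .
    have "g1 \<delta> \<delta>' = g1 \<alpha>1 \<delta>' - g1 \<beta>1 \<delta>'"
      unfolding \<delta>L using P1.gl[OF assms(13) \<beta>1(1) \<delta>'O] by simp
    hence g0: "g1 \<delta> \<delta>' = 0" using F G by simp
    have kO: "fdiff \<delta> \<delta>' \<in> Omega D1" using k\<delta> P1.KV by blast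
    have "g1 \<delta> \<delta>' = g1 (fdiff \<delta> \<delta>') \<delta>' + g1 \<delta>' \<delta>'"
      using P1.gl[OF kO \<delta>'O \<delta>'O, of 1 1] id_sp[of \<delta> \<delta>'] by simp
    moreover have "g1 (fdiff \<delta> \<delta>') \<delta>' = 0"
      using o\<delta> k\<delta> P1.gs[OF kO \<delta>'O] by simp
    ultimately have "g1 \<delta>' \<delta>' = 0" using g0 by simp
    hence "\<delta>' \<in> K1" using P1.gdef[OF \<delta>'O] P1.NK by blast
    hence "lc 1 1 (fdiff \<delta> \<delta>') \<delta>' \<in> K1" using k\<delta> P1.K by blast
    hence "\<delta> \<in> K1" using id_sp[of \<delta> \<delta>'] by simp
    hence "pb id S1 \<delta> \<in> Omega_at S1 y" unfolding K1_def ker_i_def S1_def by blast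
    hence "fdiff (pb id S1 \<alpha>1) (Q \<alpha>2) \<in> Omega_at S1 y"
      unfolding \<delta>L pb_lc \<beta>1(2)[symmetric] fdiff_lc .
    thus "compatible_forms D1 D2 Y f y \<alpha>1 \<alpha>2"
      using assms(13,14) P_Omega[OF assms(13)] Q_Omega[OF assms(14)]
      unfolding compatible_forms_def mod_eq_def S1_def[symmetric] S2_def[symmetric] eqQ
      by simp
  next
    assume ca: "compatible_forms D1 D2 Y f y \<alpha>1 \<alpha>2"
    show "compatible_functionals D1 D2 Y f y g1 g2 (g1 \<alpha>1) (g2 \<alpha>2)"
      unfolding compatible_functionals_def
    proof (intro allI impI)
      fix b1 b2 b1' b2'
      assume h: "compatible_forms D1 D2 Y f y b1 b2 \<and> is_orth_proj D1 g1 (ker_i D1 Y y) b1 b1' \<and>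
        is_orth_proj D2 g2 (ker_i D2 (f ` Y) (f y)) b2 b2'"
      hence "compatible_forms D1 D2 Y f y b1' b2'"
        using proj_compat unfolding K1_def K2_def by blast
      thus "g1 \<alpha>1 b1' = g2 \<alpha>2 b2'" using csp[OF ca] by blast
    qed
  qed
qed

end
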